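(* Let $R,S\in GL(2,\mathbb{C})$ be diagonalizable matrices with eigenvalues $r_1,r_2\in S^1$ and $s_1,s_2\in S^1$ respectively, such that $r_1\ne r_2$, $s_1\ne s_2$ and $\{r_1,r_2\}\cap\{s_1,s_2\}=\emptyset$. Suppose that $1$ is an eigenvalue of $RS^{-1}$. Then the eigenspaces $E_{r_1},E_{r_2},E_{s_1},E_{s_2}$, regarded as points of $\mathbb{CP}^1$, are pairwise distinct and lie on a circle in $\mathbb{CP}^1$.
   Context: Here $S^1$ is the unit circle in $\mathbb{C}$, $E_{r}$ denotes the eigenspace (a complex line in $\mathbb{C}^2$, i.e. a point of $\mathbb{CP}^1$) for the eigenvalue $r$, and a circle in $\mathbb{CP}^1$ means the image of the real projective line $\mathbb{RP}^1\subset\mathbb{CP}^1$ under a Möbius transformation (a round circle or a line together with $\infty$ in an affine chart). *)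

theory Defs
  imports "HOL-Analysis.Analysis"
begin

definition is_eigenvalue :: "complex^2^2 \<Rightarrow> complex \<Rightarrow> bool" where
  "is_eigenvalue A r \<longleftrightarrow> (\<exists>v. v \<noteq> 0 \<and> A *v v = r *s v)"

definition eigenspace2 :: "complex^2^2 \<Rightarrow> complex \<Rightarrow> (complex^2) set" where
  "eigenspace2 A r = {v. A *v v = r *s v}"

definition diagonalizable2 :: "complex^2^2 \<Rightarrow> bool" where
  "diagonalizable2 A \<longleftrightarrow> (\<exists>P D :: complex^2^2. invertible P \<and>
      (\<forall>i j. i \<noteq> j \<longrightarrow> D $ i $ j = 0) \<and> A = P ** D ** matrix_inv P)"

text \<open>The complex line spanned by a vector (a point of CP^1 when v is nonzero).\<close>
definition cline :: "complex^2 \<Rightarrow> (complex^2) set" where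
  "cline v = {c *s v | c. True}"

text \<open>A collection of points of CP^1 (complex lines in C^2) lies on a circle:
  they all lie in the image of RP^1 (lines spanned by nonzero real vectors)
  under a Moebius transformation (an invertible 2x2 complex matrix).\<close>
definition on_circle_CP1 :: "(complex^2) set set \<Rightarrow> bool" where
  "on_circle_CP1 Ls \<longleftrightarrow> (\<exists>M::complex^2^2. invertible M \<and>
     (\<forall>L\<in>Ls. \<exists>w::real^2. w \<noteq> 0 \<and>
        L = cline (M *v (\<chi> i. complex_of_real (w $ i)))))"

end

theory Submission
  imports Defs
begin


lemma vec2_eq: "(u::'a^2) = v \<longleftrightarrow> u$1 = v$1 \<and> u$2 = v$2"
  by (simp add: vec_eq_iff forall_2)

lemma mv_comp: "((A::complex^2^2) *v v) $ i = A$i$1 * v$1 + A$i$2 * v$2"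
  by (simp add: matrix_vector_mult_def sum_2)

lemma mv_lin: "(A::complex^2^2) *v (a *s u + b *s v) = a *s (A *v u) + b *s (A *v v)"
  by (simp add: vec2_eq mv_comp algebra_simps)

lemma mv_smult: "(A::complex^2^2) *v (a *s u) = a *s (A *v u)"
  by (simp add: vec2_eq mv_comp algebra_simps)

lemma cramer:
  fixes u v z :: "complex^2"
  assumes "u$1 * v$2 - u$2 * v$1 \<noteq> 0"
  shows "\<exists>a b. z = a *s u + b *s v"
proof -
  let ?d = "u$1 * v$2 - u$2 * v$1"
  let ?a = "(z$1 * v$2 - z$2 * v$1)/?d" and ?b = "(u$1 * z$2 - u$2 * z$1)/?d"
  have e: "?a * u$i + ?b * v$i = (?d * z$i) / ?d" if "i = 1 \<or> i = 2" for i
  proof -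
    have "?a * u$i + ?b * v$i = ((z$1 * v$2 - z$2 * v$1) * u$i + (u$1 * z$2 - u$2 * z$1) * v$i) / ?d"
      by (simp add: add_divide_distrib)
    also have "(z$1 * v$2 - z$2 * v$1) * u$i + (u$1 * z$2 - u$2 * z$1) * v$i = ?d * z$i"
      using that by (auto simp: algebra_simps)
    finally show ?thesis .
  qed
  have "z = ?a *s u + ?b *s v"
    using e[of 1] e[of 2] assms by (simp add: vec2_eq)
  then show ?thesis by blast
qed

lemma indep0:
  fixes u v :: "complex^2"
  assumes "u$1 * v$2 - u$2 * v$1 \<noteq> 0" "a *s u + b *s v = 0"
  shows "a = 0 \<and> b = 0"
proof -
  have h1: "a * u$1 + b * v$1 = 0" "a * u$2 + b * v$2 = 0"
    using assms(2) by (simp_all add: vec2_eq)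
  have "a * (u$1 * v$2 - u$2 * v$1) = v$2 * (a * u$1 + b * v$1) - v$1 * (a * u$2 + b * v$2)"
    by (simp add: algebra_simps)
  then have "a * (u$1 * v$2 - u$2 * v$1) = 0" using h1 by simp
  moreover have "b * (u$1 * v$2 - u$2 * v$1) = u$1 * (a * u$2 + b * v$2) - u$2 * (a * u$1 + b * v$1)"
    by (simp add: algebra_simps)
  then have "b * (u$1 * v$2 - u$2 * v$1) = 0" using h1 by simp
  ultimately show ?thesis using assms(1) by simp
qed

lemma eig_indep:
  fixes u v :: "complex^2" and A :: "complex^2^2"
  assumes "A *v u = a *s u" "A *v v = b *s v" "u \<noteq> 0" "v \<noteq> 0" "a \<noteq> b"
  shows "u$1 * v$2 - u$2 * v$1 \<noteq> 0"
proof
  assume d: "u$1 * v$2 - u$2 * v$1 = 0"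
  obtain l where l: "v = l *s u"
  proof (cases "u$1 = 0")
    case True
    then have "u$2 \<noteq> 0" using assms(3) by (simp add: vec2_eq)
    then have "v = (v$2/u$2) *s u" using d True by (simp add: vec2_eq field_simps)
    then show ?thesis using that by blast
  next
    case False
    then have "v = (v$1/u$1) *s u" using d by (simp add: vec2_eq field_simps)
    then show ?thesis using that by blast
  qed
  have "l \<noteq> 0" using l assms(4) by auto
  have "A *v v = (l*a) *s u" using l assms(1) by (simp add: mv_smult)
  moreover have "A *v v = (b*l) *s u" using l assms(2) by (simp add: vector_smult_assoc mult.commute)
  ultimately have "(l*a) *s u = (b*l) *s u" by (rule trans[OF sym])
  then have "l*a = b*l \<or> u = 0" by (simp only: vector_mul_rcancel)
  then show False using \<open>l \<noteq> 0\<close> assms(3,5) by auto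
qed

lemma eigspace_line:
  fixes u v :: "complex^2" and A :: "complex^2^2"
  assumes "A *v u = a *s u" "A *v v = b *s v" "u \<noteq> 0" "v \<noteq> 0" "a \<noteq> b"
  shows "eigenspace2 A a = cline u"
proof
  have d: "u$1 * v$2 - u$2 * v$1 \<noteq> 0" using eig_indep[OF assms] .
  show "eigenspace2 A a \<subseteq> cline u"
  proof
    fix z assume "z \<in> eigenspace2 A a"
    then have z: "A *v z = a *s z" by (simp add: eigenspace2_def)
    obtain x y where xy: "z = x *s u + y *s v" using cramer[OF d] by blast
    have f1: "A *v z = (x*a) *s u + (y*b) *s v" using xy assms by (simp add: mv_lin)
    have f2: "a *s z = (x*a) *s u + (y*a) *s v" using xy by (simp add: vec2_eq algebra_simps)
    have eq: "(x*a) *s u + (y*b) *s v = (x*a) *s u + (y*a) *s v" using trans[OF sym[OF f1] trans[OF z f2]] .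
    have "0 *s u + (y*(b-a)) *s v = 0"
      using eq unfolding vec2_eq by (simp add: algebra_simps)
    then have "y*(b-a) = 0" using indep0[OF d] by blast
    then have "y = 0" using assms(5) by simp
    then show "z \<in> cline u" using xy by (auto simp: cline_def)
  qed
  show "cline u \<subseteq> eigenspace2 A a"
  proof
    fix z assume "z \<in> cline u"
    then obtain c where "z = c *s u" by (auto simp: cline_def)
    then have "A *v z = a *s z" using assms(1) by (simp add: mv_smult vector_smult_assoc mult.commute)
    then show "z \<in> eigenspace2 A a" by (simp add: eigenspace2_def)
  qed
qed

lemma cline_scale:
  assumes "c \<noteq> 0" shows "cline (c *s v) = cline v"
proof -
  have "{d *s (c *s v) |d. True} = {d *s v |d. True}"
  proof (intro set_eqI iffI)
    fix z assume "z \<in> {d *s (c *s v) |d. True}"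
    then obtain d where "z = d *s (c *s v)" by blast
    then have "z = (d*c) *s v" by (simp add: vector_smult_assoc)
    then show "z \<in> {d *s v |d. True}" by blast
  next
    fix z assume "z \<in> {d *s v |d. True}"
    then obtain d where "z = d *s v" by blast
    then have "z = (d/c) *s (c *s v)" using assms by (simp add: vector_smult_assoc)
    then show "z \<in> {d *s (c *s v) |d. True}" by blast
  qed
  then show ?thesis by (simp add: cline_def)
qed

lemma not_in_cline1:
  fixes u v :: "complex^2"
  assumes "u$1 * v$2 - u$2 * v$1 \<noteq> 0" "y \<noteq> 0"
  shows "x *s u + y *s v \<notin> cline u"
proof
  assume "x *s u + y *s v \<in> cline u"
  then obtain c where "x *s u + y *s v = c *s u" by (auto simp: cline_def)
  then have "(x - c) *s u + y *s v = 0" by (simp add: vec2_eq algebra_simps)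
  then show False using indep0[OF assms(1)] assms(2) by blast
qed

lemma not_in_cline2:
  fixes u v :: "complex^2"
  assumes "u$1 * v$2 - u$2 * v$1 \<noteq> 0" "x \<noteq> 0"
  shows "x *s u + y *s v \<notin> cline v"
proof
  assume "x *s u + y *s v \<in> cline v"
  then obtain c where "x *s u + y *s v = c *s v" by (auto simp: cline_def)
  then have "x *s u + (y - c) *s v = 0" by (simp add: vec2_eq algebra_simps)
  then show False using indep0[OF assms(1)] assms(2) by blast
qed

lemma self_cline: "v \<in> cline v"
  by (auto simp: cline_def intro: exI[of _ 1])



lemma cnj_unit: assumes "cmod r = 1" shows "cnj r = inverse r"
proof -
  have "r * cnj r = 1" using complex_norm_square[of r] assms by simp
  then show ?thesis by (metis inverse_unique)
qed

lemma rho_real: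
  fixes r1 r2 s1 s2 :: complex
  assumes "cmod r1 = 1" "cmod r2 = 1" "cmod s1 = 1" "cmod s2 = 1"
    and "r1 \<noteq> s1" "r2 \<noteq> s2"
  shows "cnj ((r1 - s2) * (r2 - s1) / ((r1 - s1) * (r2 - s2))) = (r1 - s2) * (r2 - s1) / ((r1 - s1) * (r2 - s2))"
proof -
  have nz: "r1 \<noteq> 0" "r2 \<noteq> 0" "s1 \<noteq> 0" "s2 \<noteq> 0" using assms by auto
  have "cnj ((r1 - s2) * (r2 - s1) / ((r1 - s1) * (r2 - s2)))
      = (inverse r1 - inverse s2) * (inverse r2 - inverse s1) / ((inverse r1 - inverse s1) * (inverse r2 - inverse s2))"
    using assms by (simp add: cnj_unit)
  also have "\<dots> = (r1 - s2) * (r2 - s1) / ((r1 - s1) * (r2 - s2))"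
  proof -
    have i: "inverse a - inverse b = (b - a) / (a * b)" if "a \<noteq> 0" "b \<noteq> 0" for a b :: complex
      using that by (simp add: field_simps)
    let ?K = "r1 * r2 * s1 * s2"
    have K: "?K \<noteq> 0" using nz by simp
    have "(inverse r1 - inverse s2) * (inverse r2 - inverse s1) = ((s2 - r1) * (s1 - r2)) / ?K"
      using nz by (simp add: i field_simps)
    moreover have "(inverse r1 - inverse s1) * (inverse r2 - inverse s2) = ((s1 - r1) * (s2 - r2)) / ?K"
      using nz by (simp add: i field_simps)
    ultimately have "(inverse r1 - inverse s2) * (inverse r2 - inverse s1) / ((inverse r1 - inverse s1) * (inverse r2 - inverse s2))
       = ((s2 - r1) * (s1 - r2)) / ((s1 - r1) * (s2 - r2))"
      using K by simp
    also have "\<dots> = (r1 - s2) * (r2 - s1) / ((r1 - s1) * (r2 - s2))"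
      by (simp add: algebra_simps)
    finally show ?thesis .
  qed
  finally show ?thesis .
qed



lemma combo_diff: "((a1::complex) *s u + a2 *s v) - (b1 *s u + b2 *s v) = (a1 - b1) *s u + (a2 - b2) *s v"
  by (simp add: vec2_eq algebra_simps)

theorem lemma22:
  fixes R S :: "complex^2^2" and r1 r2 s1 s2 :: complex
  assumes "invertible R" and "invertible S"
    and "diagonalizable2 R" and "diagonalizable2 S"
    and "{r. is_eigenvalue R r} = {r1, r2}"
    and "{s. is_eigenvalue S s} = {s1, s2}"
    and "cmod r1 = 1" and "cmod r2 = 1" and "cmod s1 = 1" and "cmod s2 = 1"
    and "r1 \<noteq> r2" and "s1 \<noteq> s2"
    and "{r1, r2} \<inter> {s1, s2} = {}"
    and "is_eigenvalue (R ** matrix_inv S) 1"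
  shows "eigenspace2 R r1 \<noteq> eigenspace2 R r2 \<and>
         eigenspace2 R r1 \<noteq> eigenspace2 S s1 \<and>
         eigenspace2 R r1 \<noteq> eigenspace2 S s2 \<and>
         eigenspace2 R r2 \<noteq> eigenspace2 S s1 \<and>
         eigenspace2 R r2 \<noteq> eigenspace2 S s2 \<and>
         eigenspace2 S s1 \<noteq> eigenspace2 S s2 \<and>
         on_circle_CP1 {eigenspace2 R r1, eigenspace2 R r2,
                        eigenspace2 S s1, eigenspace2 S s2}"
proof -
  have "is_eigenvalue R r1" "is_eigenvalue R r2" using assms(5) by (metis insertCI mem_Collect_eq)+
  then obtain e1 e2 where e1: "e1 \<noteq> 0" "R *v e1 = r1 *s e1" and e2: "e2 \<noteq> 0" "R *v e2 = r2 *s e2"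
    unfolding is_eigenvalue_def by blast
  have "is_eigenvalue S s1" "is_eigenvalue S s2" using assms(6) by (metis insertCI mem_Collect_eq)+
  then obtain f1 f2 where f1: "f1 \<noteq> 0" "S *v f1 = s1 *s f1" and f2: "f2 \<noteq> 0" "S *v f2 = s2 *s f2"
    unfolding is_eigenvalue_def by blast
  have ER1: "eigenspace2 R r1 = cline e1" using eigspace_line[OF e1(2) e2(2) e1(1) e2(1) assms(11)] .
  have ER2: "eigenspace2 R r2 = cline e2" using eigspace_line[OF e2(2) e1(2) e2(1) e1(1)] assms(11) by auto
  have ES1: "eigenspace2 S s1 = cline f1" using eigspace_line[OF f1(2) f2(2) f1(1) f2(1) assms(12)] .
  have ES2: "eigenspace2 S s2 = cline f2" using eigspace_line[OF f2(2) f1(2) f2(1) f1(1)] assms(12) by auto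
  have de: "e1$1 * e2$2 - e1$2 * e2$1 \<noteq> 0" using eig_indep[OF e1(2) e2(2) e1(1) e2(1) assms(11)] .
  have df: "f1$1 * f2$2 - f1$2 * f2$1 \<noteq> 0" using eig_indep[OF f1(2) f2(2) f1(1) f2(1) assms(12)] .
  obtain x1 y1 where xy1: "f1 = x1 *s e1 + y1 *s e2" using cramer[OF de] by blast
  obtain x2 y2 where xy2: "f2 = x2 *s e1 + y2 *s e2" using cramer[OF de] by blast
  have "f1$1 * f2$2 - f1$2 * f2$1 = (x1*y2 - x2*y1) * (e1$1 * e2$2 - e1$2 * e2$1)"
    unfolding xy1 xy2 by (simp add: algebra_simps)
  then have dxy: "x1*y2 - x2*y1 \<noteq> 0" using df by auto
  obtain v where v: "v \<noteq> 0" "(R ** matrix_inv S) *v v = 1 *s v"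
    using assms(14) unfolding is_eigenvalue_def by blast
  have "S ** matrix_inv S = mat 1 \<and> matrix_inv S ** S = mat 1"
    using assms(2) unfolding invertible_def matrix_inv_def by (rule someI_ex)
  then have SS: "S ** matrix_inv S = mat 1" by blast
  define w where "w = matrix_inv S *v v"
  have Sw: "S *v w = v" unfolding w_def matrix_vector_mul_assoc SS by simp
  have Rw: "R *v w = v" using v(2) unfolding w_def matrix_vector_mul_assoc by simp
  have "w \<noteq> 0" using Sw v(1) by auto
  obtain g h where gh: "w = g *s f1 + h *s f2" using cramer[OF df] by blast
  have gh0: "g \<noteq> 0 \<or> h \<noteq> 0" using gh \<open>w \<noteq> 0\<close> by auto
  have Rf1: "R *v f1 = (x1*r1) *s e1 + (y1*r2) *s e2" unfolding xy1 mv_lin e1(2) e2(2) by (simp add: mult.commute)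
  have Rf2: "R *v f2 = (x2*r1) *s e1 + (y2*r2) *s e2" unfolding xy2 mv_lin e1(2) e2(2) by (simp add: mult.commute)
  have Rw2: "R *v w = (g*(x1*r1) + h*(x2*r1)) *s e1 + (g*(y1*r2) + h*(y2*r2)) *s e2"
    unfolding gh mv_lin Rf1 Rf2 by (simp add: vec2_eq algebra_simps)
  have Sw2: "S *v w = (g*(s1*x1) + h*(s2*x2)) *s e1 + (g*(s1*y1) + h*(s2*y2)) *s e2"
    unfolding gh mv_lin f1(2) f2(2) unfolding xy1 xy2 by (simp add: vec2_eq algebra_simps)
  have "((g*(x1*r1) + h*(x2*r1)) - (g*(s1*x1) + h*(s2*x2))) *s e1
      + ((g*(y1*r2) + h*(y2*r2)) - (g*(s1*y1) + h*(s2*y2))) *s e2 = 0"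
    using Rw2 Sw2 Rw Sw combo_diff by (metis diff_self)
  then have EE: "(g*(x1*r1) + h*(x2*r1)) - (g*(s1*x1) + h*(s2*x2)) = 0"
      "(g*(y1*r2) + h*(y2*r2)) - (g*(s1*y1) + h*(s2*y2)) = 0"
    using indep0[OF de] by blast+
  define A where "A = r1 - s1"
  define B where "B = r1 - s2"
  define C where "C = r2 - s2"
  define D where "D = r2 - s1"
  have ABCD: "A \<noteq> 0" "B \<noteq> 0" "C \<noteq> 0" "D \<noteq> 0"
    using assms(13) unfolding A_def B_def C_def D_def by auto
  have E1: "g*x1*A + h*x2*B = 0" using EE(1) unfolding A_def B_def by (simp add: algebra_simps)
  have E2: "g*y1*D + h*y2*C = 0" using EE(2) unfolding C_def D_def by (simp add: algebra_simps)
  have x1: "x1 \<noteq> 0"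
  proof
    assume x: "x1 = 0"
    then have "x2 \<noteq> 0" "y1 \<noteq> 0" using dxy by auto
    then have "h = 0" using E1 x ABCD by simp
    then have "g = 0" using E2 ABCD \<open>y1 \<noteq> 0\<close> by simp
    then show False using gh0 \<open>h = 0\<close> by simp
  qed
  have y1: "y1 \<noteq> 0"
  proof
    assume y: "y1 = 0"
    then have "x1 \<noteq> 0" "y2 \<noteq> 0" using dxy by auto
    then have "h = 0" using E2 y ABCD by simp
    then have "g = 0" using E1 ABCD \<open>x1 \<noteq> 0\<close> by simp
    then show False using gh0 \<open>h = 0\<close> by simp
  qed
  have x2: "x2 \<noteq> 0"
  proof
    assume x: "x2 = 0"
    then have "x1 \<noteq> 0" "y2 \<noteq> 0" using dxy by auto
    then have "g = 0" using E1 x ABCD by simp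
    then have "h = 0" using E2 ABCD \<open>y2 \<noteq> 0\<close> by simp
    then show False using gh0 \<open>g = 0\<close> by simp
  qed
  have y2: "y2 \<noteq> 0"
  proof
    assume y: "y2 = 0"
    then have "x2 \<noteq> 0" "y1 \<noteq> 0" using dxy by auto
    then have "g = 0" using E2 y ABCD by simp
    then have "h = 0" using E1 ABCD \<open>x2 \<noteq> 0\<close> by simp
    then show False using gh0 \<open>g = 0\<close> by simp
  qed
  have g: "g \<noteq> 0" using gh0 E1 x2 ABCD by auto
  have h: "h \<noteq> 0" using gh0 E1 x1 ABCD by auto
  have a: "g*x1*A = -(h*x2*B)" using E1 by (simp add: eq_neg_iff_add_eq_0)
  have b: "h*y2*C = -(g*y1*D)" using E2 by (simp add: eq_neg_iff_add_eq_0 add.commute)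
  have "(g*x1*A)*(h*y2*C) = (-(h*x2*B))*(-(g*y1*D))"
    by (simp only: a b)
  then have "(g*h)*(x1*y2*A*C) = (g*h)*(x2*y1*B*D)" by (simp add: algebra_simps)
  then have key: "x1*y2*A*C = x2*y1*B*D" using g h by simp
  define \<rho> where "\<rho> = x1*y2/(y1*x2)"
  have "\<rho> = B*D/(A*C)" unfolding \<rho>_def using key x2 y1 ABCD by (simp add: field_simps)
  then have "cnj \<rho> = \<rho>" using rho_real[OF assms(7-10)] assms(13) unfolding A_def B_def C_def D_def by auto
  then have \<rho>r: "complex_of_real (Re \<rho>) = \<rho>" by (metis Reals_cnj_iff complex_is_Real_iff of_real_Re)
  have n1: "cline e1 \<noteq> cline e2"
  proof -
    have "1 *s e1 + 0 *s e2 \<notin> cline e2" using not_in_cline2[OF de, of 1 0] by simp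
    then show ?thesis using self_cline[of e1] by auto
  qed
  have n2: "cline e1 \<noteq> cline f1" using not_in_cline1[OF de y1, of x1] self_cline[of f1] xy1 by auto
  have n3: "cline e1 \<noteq> cline f2" using not_in_cline1[OF de y2, of x2] self_cline[of f2] xy2 by auto
  have n4: "cline e2 \<noteq> cline f1" using not_in_cline2[OF de x1, of y1] self_cline[of f1] xy1 by auto
  have n5: "cline e2 \<noteq> cline f2" using not_in_cline2[OF de x2, of y2] self_cline[of f2] xy2 by auto
  have n6: "cline f1 \<noteq> cline f2"
  proof -
    have "1 *s f1 + 0 *s f2 \<notin> cline f2" using not_in_cline2[OF df, of 1 0] by simp
    then show ?thesis using self_cline[of f1] by auto
  qed
  define M :: "complex^2^2" where "M = (\<chi> i j. if j = 1 then x1 * e1$i else y1 * e2$i)"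
  have Mv: "M *v (\<chi> i. complex_of_real ((vector [a, b] :: real^2)$i)) = (of_real a * x1) *s e1 + (of_real b * y1) *s e2" for a b
    unfolding M_def by (simp add: vec2_eq mv_comp algebra_simps)
  have "det M = x1 * y1 * (e1$1 * e2$2 - e1$2 * e2$1)"
    unfolding M_def det_2 by (simp add: algebra_simps)
  then have invM: "invertible M" using x1 y1 de by (simp add: invertible_det_nz)
  have nzv: "(vector [a, b] :: real^2) \<noteq> 0" if "a \<noteq> 0" for a b
    using that by (simp add: vec2_eq)
  have c1: "cline e1 = cline (M *v (\<chi> i. complex_of_real ((vector [1, 0] :: real^2)$i)))"
    unfolding Mv using cline_scale[OF x1, of e1] by simp
  have c2: "cline e2 = cline (M *v (\<chi> i. complex_of_real ((vector [0, 1] :: real^2)$i)))"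
    unfolding Mv using cline_scale[OF y1, of e2] by simp
  have c3: "cline f1 = cline (M *v (\<chi> i. complex_of_real ((vector [1, 1] :: real^2)$i)))"
    unfolding Mv xy1 by simp
  have "M *v (\<chi> i. complex_of_real ((vector [1, Re \<rho>] :: real^2)$i)) = (x1/x2) *s f2"
    unfolding Mv \<rho>r unfolding xy2 \<rho>_def using x2 y1 by (simp add: vec2_eq field_simps)
  then have c4: "cline f2 = cline (M *v (\<chi> i. complex_of_real ((vector [1, Re \<rho>] :: real^2)$i)))"
    using cline_scale[of "x1/x2" f2] x1 x2 by simp
  have nz4: "(vector [1, 0] :: real^2) \<noteq> 0" "(vector [0, 1] :: real^2) \<noteq> 0"
    "(vector [1, 1] :: real^2) \<noteq> 0" "(vector [1, Re \<rho>] :: real^2) \<noteq> 0"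
    by (simp_all add: vec2_eq)
  have "\<forall>L\<in>{cline e1, cline e2, cline f1, cline f2}. \<exists>w::real^2. w \<noteq> 0 \<and>
        L = cline (M *v (\<chi> i. complex_of_real (w $ i)))"
    using c1 c2 c3 c4 nz4 by blast
  then have circ: "on_circle_CP1 {cline e1, cline e2, cline f1, cline f2}"
    unfolding on_circle_CP1_def using invM by blast
  show ?thesis unfolding ER1 ER2 ES1 ES2 using n1 n2 n3 n4 n5 n6 circ by blast
qed

end
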